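(* Let $C$ be a field of characteristic zero, let $P(x,y)\in C[x,y]$ be a polynomial with $\deg_yP=d$, and let $R(x)=\operatorname{Res}_y(P,P_y)$. Assume that $\alpha\in\bar C$ is a root of $R(x)$ of multiplicity $k$. Then the squarefree part \[ S(y)=P(\alpha,y)\big/\gcd\bigl(P(\alpha,y),P_y(\alpha,y)\bigr) \] of $P(\alpha,y)$ has degree at least $d-k$.
   Context: $P_y$ is the partial derivative of $P$ with respect to $y$, and $\operatorname{Res}_y$ is the resultant with respect to $y$ (determinant of the Sylvester matrix). *)

theory Defs
  imports "Subresultants.Resultant_Prelim" "HOL-Computational_Algebra.Polynomial_Factorial"
begin

text \<open>Bivariate polynomials P(x,y) are represented as 'a poly poly: a polynomial in y
  whose coefficients are polynomials in x.  Evaluation of the x-variable at a point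
  alpha of an extension field (given by a field embedding f) yields a univariate
  polynomial in y.\<close>

definition eval_x :: "('a::comm_ring_1 \<Rightarrow> 'b::comm_ring_1) \<Rightarrow> 'b \<Rightarrow> 'a poly poly \<Rightarrow> 'b poly" where
  "eval_x f \<alpha> P = map_poly (\<lambda>c. poly (map_poly f c) \<alpha>) P"

definition squarefree_part :: "'b::field_gcd poly \<Rightarrow> 'b poly" where
  "squarefree_part p = p div gcd p (pderiv p)"

end

theory Submission
  imports Defs
begin

lemma sylv_sub_index2:
  fixes p q :: "'c::comm_semiring_1 poly"
  assumes "degree p \<le> m" "degree q \<le> n" "i < m+n" "j < m+n"
  shows "sylvester_mat_sub m n p q $$ (i,j) = (if i < n then coeff (monom 1 (n - i) * p) (m+n-j)
     else coeff (monom 1 (m+n-i) * q) (m+n-j))"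
  using assms by (auto simp: sylvester_mat_sub_index Polynomial.coeff_monom_mult coeff_eq_0)

lemma sum_monom_coeff:
  fixes W x :: "'c::comm_semiring_1 poly"
  assumes "degree W \<le> L" "coeff W 0 = 0"
  shows "(\<Sum>e\<in>{1..L}. coeff W e * coeff (monom 1 e * x) E) = coeff (W * x) E"
proof -
  have "coeff (W*x) E = coeff ((\<Sum>e\<le>L. monom (coeff W e) e) * x) E"
    using poly_as_sum_of_monoms'[OF assms(1)] by simp
  also have "\<dots> = (\<Sum>e\<le>L. coeff W e * coeff (monom 1 e * x) E)"
    by (simp add: sum_distrib_right coeff_sum Polynomial.coeff_monom_mult, intro sum.cong, auto)
  also have "{..L} = insert 0 {1..L}" by auto
  also have "(\<Sum>e\<in>insert 0 {1..L}. coeff W e * coeff (monom 1 e * x) E)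
     = (\<Sum>e\<in>{1..L}. coeff W e * coeff (monom 1 e * x) E)"
    using assms(2) by (subst sum.insert) auto
  finally show ?thesis by simp
qed

lemma sylv_comb:
  fixes p q U V :: "'c::comm_semiring_1 poly"
  assumes "degree p \<le> m" "degree q \<le> n" "coeff U 0 = 0" "degree U \<le> n"
    "coeff V 0 = 0" "degree V \<le> m" "j < m+n"
  shows "(\<Sum>k<m+n. (if k<n then coeff U (n-k) else coeff V (m+n-k)) * sylvester_mat_sub m n p q $$ (k,j))
    = coeff (U*p + V*q) (m+n-j)"
proof -
  let ?E = "m+n-j"
  let ?g = "\<lambda>k. (if k<n then coeff U (n-k) else coeff V (m+n-k)) * sylvester_mat_sub m n p q $$ (k,j)"
  have "(\<Sum>k<m+n. ?g k) = (\<Sum>k\<in>{0..<m+n}. ?g k)" by (simp only: lessThan_atLeast0)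
  also have "\<dots> = (\<Sum>k\<in>{0..<n}. ?g k) + (\<Sum>k\<in>{n..<m+n}. ?g k)"
    by (rule sum.atLeastLessThan_concat[symmetric]) auto
  also have "(\<Sum>k\<in>{0..<n}. ?g k) = (\<Sum>k\<in>{0..<n}. coeff U (n-k) * coeff (monom 1 (n-k) * p) ?E)"
    by (rule sum.cong) (use assms in \<open>auto simp: sylv_sub_index2\<close>)
  also have "\<dots> = (\<Sum>e\<in>{1..n}. coeff U e * coeff (monom 1 e * p) ?E)"
    by (rule sum.reindex_bij_witness[of _ "\<lambda>e. n - e" "\<lambda>k. n - k"]) auto
  also have "\<dots> = coeff (U*p) ?E" using assms by (intro sum_monom_coeff) auto
  also have "(\<Sum>k\<in>{n..<m+n}. ?g k) = (\<Sum>k\<in>{n..<m+n}. coeff V (m+n-k) * coeff (monom 1 (m+n-k) * q) ?E)"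
    by (rule sum.cong) (use assms in \<open>auto simp: sylv_sub_index2\<close>)
  also have "\<dots> = (\<Sum>e\<in>{1..m}. coeff V e * coeff (monom 1 e * q) ?E)"
    by (rule sum.reindex_bij_witness[of _ "\<lambda>e. m + n - e" "\<lambda>k. m + n - k"]) auto
  also have "\<dots> = coeff (V*q) ?E" using assms by (intro sum_monom_coeff) auto
  finally show ?thesis by simp
qed

lemma det_dvd_rows:
  fixes A :: "'c::comm_ring_1 mat"
  assumes "A \<in> carrier_mat N N" "finite R" "R \<subseteq> {..<N}" "\<forall>i\<in>R. \<forall>j<N. q dvd A $$ (i,j)"
  shows "q ^ card R dvd det A"
  using assms(2,1,3,4)
proof (induction R arbitrary: A rule: finite_induct)
  case empty
  then show ?case by simp
next
  case (insert r R)
  define B where "B = mat N N (\<lambda>(i,j). if i = r then (SOME c. A $$ (i,j) = q * c) else A $$ (i,j))"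
  have B: "B \<in> carrier_mat N N" unfolding B_def by auto
  have rN: "r < N" using insert by auto
  have "A = multrow r q B"
  proof (rule eq_matI)
    fix i j assume ij: "i < dim_row (multrow r q B)" "j < dim_col (multrow r q B)"
    show "A $$ (i, j) = multrow r q B $$ (i, j)"
    proof (cases "i = r")
      case True
      then have "q dvd A $$ (i,j)" using insert ij B by auto
      then have "A $$ (i,j) = q * (SOME c. A $$ (i,j) = q * c)"
        by (metis (mono_tags, lifting) dvdE someI_ex)
      then show ?thesis using ij B True unfolding B_def by auto
    qed (use ij B in \<open>auto simp: B_def\<close>)
  qed (use B insert in auto)
  then have "det A = q * det B" using det_multrow[OF rN B] by simp
  moreover have "q ^ card R dvd det B"
    by (rule insert.IH[OF B]) (use insert in \<open>auto simp: B_def\<close>)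
  ultimately show ?case using insert by (simp add: mult_dvd_mono)
qed

lemma unit_prod_list: "\<forall>x\<in>set xs. is_unit x \<Longrightarrow> is_unit (prod_list (xs :: 'c::algebraic_semidom list))"
  by (induction xs) auto

lemma deg_pderiv_char:
  fixes p :: "'c::idom poly"
  assumes char: "\<And>n::nat. n > 0 \<Longrightarrow> (of_nat n :: 'c) \<noteq> 0"
  shows "degree (pderiv p) = degree p - 1"
proof (cases "degree p = 0")
  case True then show ?thesis using degree_pderiv_le[of p] by simp
next
  case False
  then obtain e where e: "degree p = Suc e" by (cases "degree p") auto
  have "p \<noteq> 0" using False by auto
  then have "coeff p (Suc e) \<noteq> 0" using e by (metis leading_coeff_0_iff)
  then have "coeff (pderiv p) e \<noteq> 0" using char[of "Suc e"] by (simp add: coeff_pderiv)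
  then have "degree (pderiv p) \<ge> e" by (rule le_degree)
  with degree_pderiv_le[of p] e show ?thesis by simp
qed

lemma pderiv_deg0:
  fixes p :: "'c::idom poly"
  assumes "degree p = 0" shows "pderiv p = 0"
  by (rule poly_eqI) (use assms in \<open>auto simp: coeff_pderiv coeff_eq_0\<close>)

lemma main_dvd:
  fixes Q :: "'b::field_gcd poly poly" and \<alpha> :: 'b
  assumes char: "\<And>n::nat. n > 0 \<Longrightarrow> (of_nat n :: 'b) \<noteq> 0"
  shows "[:-\<alpha>,1:] ^ (degree Q - degree (squarefree_part (map_poly (\<lambda>c. poly c \<alpha>) Q)))
    dvd resultant Q (pderiv Q)"
proof -
  define ev where "ev = (\<lambda>c::'b poly. poly c \<alpha>)"
  define m where "m = degree Q"
  define Q1 where "Q1 = pderiv Q"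
  have charP: "\<And>n::nat. n>0 \<Longrightarrow> (of_nat n :: 'b poly) \<noteq> 0"
    using char by (simp add: of_nat_poly)
  define n where "n = m - 1"
  have degQ1: "degree Q1 = n" using deg_pderiv_char[OF charP] unfolding Q1_def n_def m_def .
  define p where "p = map_poly ev Q"
  define p1 where "p1 = pderiv p"
  have p1_eq: "map_poly ev Q1 = p1"
    by (simp add: p1_def p_def Q1_def ev_def poly_hom.map_poly_pderiv)
  define M where "M = sylvester_mat_sub m n Q Q1"
  have res: "resultant Q (pderiv Q) = det M"
    unfolding resultant_def sylvester_mat_def M_def m_def degQ1[symmetric] Q1_def ..
  have MC: "M \<in> carrier_mat (m+n) (m+n)" unfolding M_def by auto
  have Mev: "ev (M $$ (i,j)) = sylvester_mat_sub m n p p1 $$ (i,j)" if "i<m+n" "j<m+n" for i j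
  proof -
    have "map_mat ev M = sylvester_mat_sub m n p p1"
      unfolding M_def p_def p1_eq[symmetric] by (rule sylvester_mat_sub_map) (simp add: ev_def)
    then show ?thesis using that MC by (metis carrier_matD index_map_mat(1))
  qed
  have degp: "degree p \<le> m" unfolding p_def m_def by (rule degree_map_poly_le)
  have degp1: "degree p1 = degree p - 1" unfolding p1_def using deg_pderiv_char[OF char] .
  have degp1n: "degree p1 \<le> n" using degp degp1 unfolding n_def by simp
  define q where "q = [:-\<alpha>,1::'b:]"
  have dvd_ev: "q dvd x" if "ev x = 0" for x using that by (simp add: ev_def q_def poly_eq_0_iff_dvd)
  define s where "s = degree (squarefree_part p)"
  have goal: "q ^ (m - s) dvd det M"
  proof (cases "p1 = 0")
    case True
    have "q ^ card {n..<m+n} dvd det M"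
    proof (rule det_dvd_rows[OF MC])
      show "\<forall>i\<in>{n..<m + n}. \<forall>j<m + n. q dvd M $$ (i, j)"
      proof (intro ballI allI impI dvd_ev)
        fix i j assume ij: "i \<in> {n..<m+n}" "j < m+n"
        then show "ev (M $$ (i, j)) = 0" using True by (simp add: Mev sylvester_mat_sub_index)
      qed
    qed auto
    then have "q ^ m dvd det M" by simp
    then show ?thesis by (meson diff_le_self dvd_trans le_imp_power_dvd)
  next
    case False
    then have p0: "p \<noteq> 0" unfolding p1_def by auto
    have degp_pos: "degree p \<noteq> 0" using False pderiv_deg0 unfolding p1_def by blast
    define g where "g = gcd p p1"
    define a where "a = p div g"
    define b where "b = p1 div g"
    have sq: "squarefree_part p = a" unfolding squarefree_part_def a_def g_def p1_def ..
    have g0: "g \<noteq> 0" using p0 unfolding g_def by simp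
    have pa: "p = a * g" unfolding a_def g_def by simp
    have pb: "p1 = b * g" unfolding b_def g_def by simp
    have a0: "a \<noteq> 0" using pa p0 by auto
    have b0: "b \<noteq> 0" using pb False by auto
    have d1: "degree p = degree a + degree g" using pa a0 g0 by (simp add: degree_mult_eq)
    have d2: "degree p1 = degree b + degree g" using pb b0 g0 by (simp add: degree_mult_eq)
    have s_def': "s = degree a" unfolding s_def sq ..
    have s1: "s \<ge> 1" and degb: "degree b = s - 1" using d1 d2 degp1 degp_pos s_def' by auto
    define L where "L = m - s"
    have sm: "s \<le> m" using d1 degp s_def' by simp
    have Ln: "L \<le> n" unfolding L_def n_def using s1 by simp
    define U where "U i = b * monom 1 (L - i)" for i
    define V where "V i = - (a * monom 1 (L - i))" for i
    define c where "c i k = (if k < n then coeff (U i) (n-k) else coeff (V i) (m+n-k))" for i k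
    define C where "C = mat (m+n) (m+n) (\<lambda>(i,k). if i < L then [:c i k:] else (if i = k then 1 else 0))"
    have CC: "C \<in> carrier_mat (m+n) (m+n)" unfolding C_def by auto
    have degU: "degree (U i) = n - i" if "i < L" for i
      using that b0 degb s1 unfolding U_def L_def n_def
      by (simp add: degree_mult_eq degree_monom_eq)
    have U0: "U i \<noteq> 0" if "i < L" for i using that b0 unfolding U_def by (simp add: monom_eq_0_iff)
    have ut: "upper_triangular C"
      unfolding upper_triangular_def
    proof (intro allI impI)
      fix i k assume "i < dim_row C" "k < i"
      then show "C $$ (i, k) = 0" using Ln degU
        by (auto simp: C_def c_def coeff_eq_0)
    qed
    have "det C = prod_list (diag_mat C)" by (rule det_upper_triangular[OF ut CC])
    moreover have "is_unit (prod_list (diag_mat C))"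
    proof (rule unit_prod_list, rule ballI)
      fix x assume "x \<in> set (diag_mat C)"
      then obtain i where i: "i < m+n" "x = C $$ (i,i)" unfolding diag_mat_def using CC by auto
      show "is_unit x"
      proof (cases "i < L")
        case True
        then have "c i i = lead_coeff (U i)" using Ln degU by (simp add: c_def)
        then have "c i i \<noteq> 0" using U0 True by simp
        then show ?thesis using i True by (simp add: C_def is_unit_const_poly_iff)
      qed (use i in \<open>simp add: C_def\<close>)
    qed
    ultimately have unitC: "is_unit (det C)" by simp
    have rows: "\<forall>i\<in>{..<L}. \<forall>j<m+n. q dvd (C * M) $$ (i,j)"
    proof (intro ballI allI impI dvd_ev)
      fix i j assume i: "i \<in> {..<L}" and j: "j < m+n"
      have iN: "i < m+n" using i Ln by auto
      have "(C * M) $$ (i,j) = (\<Sum>k\<in>{0..<m+n}. C $$ (i,k) * M $$ (k,j))"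
        using CC MC iN j by (simp add: scalar_prod_def)
      also have "\<dots> = (\<Sum>k\<in>{0..<m+n}. [:c i k:] * M $$ (k,j))"
        using i iN by (intro sum.cong) (auto simp: C_def)
      finally have "ev ((C * M) $$ (i,j)) = (\<Sum>k\<in>{0..<m+n}. c i k * ev (M $$ (k,j)))"
        by (simp add: ev_def poly_sum)
      also have "\<dots> = (\<Sum>k<m+n. c i k * sylvester_mat_sub m n p p1 $$ (k,j))"
        using j by (simp add: Mev lessThan_atLeast0)
      also have "\<dots> = coeff (U i * p + V i * p1) (m+n-j)"
        unfolding c_def
      proof (rule sylv_comb[OF degp degp1n _ _ _ _ j])
        show "coeff (U i) 0 = 0" using i unfolding U_def by (simp add: mult.commute[of b] Polynomial.coeff_monom_mult)
        show "degree (U i) \<le> n" using degU i by simp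
        show "coeff (V i) 0 = 0" using i unfolding V_def by (simp add: mult.commute[of a] Polynomial.coeff_monom_mult)
        show "degree (V i) \<le> m" using i unfolding V_def L_def s_def'
          using a0 sm by (simp add: degree_mult_eq degree_monom_eq)
      qed
      also have "U i * p + V i * p1 = 0" unfolding U_def V_def pa pb by (simp add: algebra_simps)
      finally show "ev ((C * M) $$ (i, j)) = 0" by simp
    qed
    have "q ^ card {..<L} dvd det (C * M)"
      by (rule det_dvd_rows[OF mult_carrier_mat[OF CC MC] _ _ rows]) (use Ln in auto)
    then have "q ^ L dvd det C * det M" using det_mult[OF CC MC] by simp
    then show ?thesis using unitC dvd_mult_unit_iff' L_def by blast
  qed
  show ?thesis using goal unfolding res q_def m_def s_def p_def ev_def .
qed

theorem lemma13:
  fixes P :: "'a::field_char_0 poly poly"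
    and f :: "'a \<Rightarrow> 'b::{alg_closed_field,field_gcd}"
    and \<alpha> :: 'b and d k :: nat
  assumes "field_hom f"
    and "degree P = d"
    and "resultant P (pderiv P) \<noteq> 0"
    and "poly (map_poly f (resultant P (pderiv P))) \<alpha> = 0"
    and "order \<alpha> (map_poly f (resultant P (pderiv P))) = k"
  shows "int (degree (squarefree_part (eval_x f \<alpha> P))) \<ge> int d - int k"
proof -
  interpret f: field_hom f by fact
  interpret mp: map_poly_inj_idom_hom f by standard
  define Q where "Q = map_poly (map_poly f) P"
  have degQ: "degree Q = d" using assms(2) by (simp add: Q_def)
  have pd: "pderiv Q = map_poly (map_poly f) (pderiv P)" by (simp add: Q_def mp.map_poly_pderiv)
  have res: "resultant Q (pderiv Q) = map_poly f (resultant P (pderiv P))"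
    using mp.resultant_hom[of P "pderiv P"] pd by (simp add: Q_def)
  have ev: "eval_x f \<alpha> P = map_poly (\<lambda>c. poly c \<alpha>) Q"
    unfolding eval_x_def Q_def by (subst map_poly_map_poly) (auto simp: o_def)
  have char: "(of_nat n :: 'b) \<noteq> 0" if "n > 0" for n :: nat
  proof -
    have "(of_nat n :: 'a) \<noteq> 0" using that by simp
    then have "f (of_nat n) \<noteq> 0" by (simp only: f.hom_0_iff) simp
    moreover have "f (of_nat n) = of_nat n" by (rule f.hom_of_nat)
    ultimately show ?thesis by simp
  qed
  have D0: "map_poly f (resultant P (pderiv P)) \<noteq> 0" using assms(3) by simp
  have "[:-\<alpha>,1:] ^ (d - degree (squarefree_part (eval_x f \<alpha> P))) dvd map_poly f (resultant P (pderiv P))"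
    using main_dvd[where Q=Q and \<alpha>=\<alpha>, OF char] unfolding res degQ ev by simp
  then have "d - degree (squarefree_part (eval_x f \<alpha> P)) \<le> k"
    using D0 assms(5) by (simp add: order_divides)
  then show ?thesis by linarith
qed

end
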